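(* Let $A,B\in\mathbb R^{\mathcal N\times\mathcal N}$ with $A$ invertible, and assume that among the generalized eigenvalues $\lambda\in\mathbb C$ of $Av=\lambda Bv$ there is a unique positive one $\lambda>0$ of smallest modulus, and that it is simple. Let $u,u^*$, $k$, $M$, $\tilde u^*$, $P$, $P^*$ be as in the context. Let $u_N,u_N^*\in\mathbb R^{\mathcal N}$ with $\langle u_N^*,Au_N\rangle\neq0$, and let $k_N:=\frac{\langle u_N^*,Bu_N\rangle}{\langle u_N^*,Au_N\rangle}$ satisfy $k_N\notin\sigma\big((PMP)|_{[\operatorname{Span}\{\tilde u^*\}]^\perp}\big)$ and $k_N\notin\sigma\big((P^*M^TP^* )|_{[\operatorname{Span}\{u\}]^\perp}\big)$. Let $R_N=(B-k_NA)u_N$, $R_N^*=(B^T-k_NA^T)u_N^*$. Then $$|k_N-k|\le C_N^k\,\eta_N^k,\qquad \eta_N^k:=\frac{\|R_N\|\,\|R_N^*\|}{|\langle u_N^*,Au_N\rangle|},$$ where $$C_N^k:=\Big\|\big[P^*(P^*M^TP^*-k_NI)^+P^*\big]^T(M-kI)P(PMP-k_NI)^+PA^{-1}\Big\|.$$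
   Context: $\mathbb R^{\mathcal N}$ carries the Euclidean inner product $\langle\cdot,\cdot\rangle$ and norm $\|\cdot\|$; on matrices $\|\cdot\|$ is the induced operator norm. "Simple" means $k=1/\lambda$ is an algebraically simple eigenvalue of $M=A^{-1}B$. $u,u^*$ are unit vectors with $Au=\lambda Bu$, $A^Tu^*=\lambda B^Tu^*$; $\tilde u^*=A^Tu^*/\|A^Tu^*\|$; $P=I-\frac{u(\tilde u^* )^T}{\langle u,\tilde u^*\rangle}$, $P^*=I-\frac{\tilde u^*u^T}{\langle u,\tilde u^*\rangle}$ (here $\langle u,\tilde u^*\rangle\ne0$). The operator $(PMP-k_NI)^+$ is the linear map equal to the inverse of $(PMP-k_NI)|_{[\operatorname{Span}\{\tilde u^*\}]^\perp}$ (an invertible map of $[\operatorname{Span}\{\tilde u^*\}]^\perp$ onto itself) on $[\operatorname{Span}\{\tilde u^*\}]^\perp$ and equal to $0$ on $\operatorname{Span}\{u\}$; likewise $(P^*M^TP^*-k_NI)^+$ equals the inverse of $(P^*M^TP^*-k_NI)|_{[\operatorname{Span}\{u\}]^\perp}$ on $[\operatorname{Span}\{u\}]^\perp$ and $0$ on $\operatorname{Span}\{\tilde u^*\}$. *)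

theory Defs
  imports "HOL-Analysis.Analysis" "HOL-Computational_Algebra.Polynomial"
begin

text \<open>Complexification of a real matrix.\<close>
definition cmat :: "real^'n^'m \<Rightarrow> complex^'n^'m" where
  "cmat A = (\<chi> i j. complex_of_real (A $ i $ j))"

text \<open>Generalized eigenvalue (over the complex numbers) of the pencil A v = lambda B v.\<close>
definition gen_eigenvalue :: "real^'n^'n \<Rightarrow> real^'n^'n \<Rightarrow> complex \<Rightarrow> bool" where
  "gen_eigenvalue A B l \<longleftrightarrow>
     (\<exists>v::complex^'n. v \<noteq> 0 \<and> cmat A *v v = l *s (cmat B *v v))"

text \<open>Characteristic polynomial det(X I - M).\<close>
definition charpoly :: "real^'n^'n \<Rightarrow> real poly" where
  "charpoly M = det (\<chi> i j. (if i = j then [:0, 1:] else 0) - [: M $ i $ j :])"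

text \<open>Algebraically simple eigenvalue: root of multiplicity one of the characteristic polynomial.\<close>
definition alg_simple_eigenvalue :: "real^'n^'n \<Rightarrow> real \<Rightarrow> bool" where
  "alg_simple_eigenvalue M k \<longleftrightarrow> order k (charpoly M) = 1"

text \<open>Outer product x y^T.\<close>
definition outer :: "real^'n \<Rightarrow> real^'n \<Rightarrow> real^'n^'n" where
  "outer x y = (\<chi> i j. x $ i * y $ j)"

text \<open>mu is in the spectrum of T restricted to the hyperplane w^perp
  (T is assumed to leave w^perp invariant in the application).\<close>
definition restr_eigenvalue :: "real^'n^'n \<Rightarrow> real^'n \<Rightarrow> real \<Rightarrow> bool" where
  "restr_eigenvalue T w mu \<longleftrightarrow> (\<exists>y. y \<noteq> 0 \<and> y \<bullet> w = 0 \<and> T *v y = mu *s y)"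

text \<open>The map equal to the inverse of T restricted to w^perp on w^perp and zero on span z.\<close>
definition restr_pinv :: "real^'n^'n \<Rightarrow> real^'n \<Rightarrow> real^'n \<Rightarrow> real^'n^'n" where
  "restr_pinv T w z = (THE X. (\<forall>y. y \<bullet> w = 0 \<longrightarrow> (X *v y) \<bullet> w = 0 \<and> T *v (X *v y) = y)
                              \<and> X *v z = 0)"

end

theory Submission
  imports Defs
begin

definition rrep :: "real^'n^'n \<Rightarrow> 'n \<Rightarrow> real^'n \<Rightarrow> real^'n^'n" where
  "rrep N i v = (\<chi> r. if r = i then v else row r N)"

lemma rrep_zero:
  fixes N :: "real^'n^'n"
  assumes "N *v u = 0" "u \<noteq> 0" "v \<bullet> u = 0"
  shows "det (rrep N i v) = 0"
proof -
  have "rrep N i v *v u = 0"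
    using assms unfolding rrep_def
    by (auto simp: vec_eq_iff matrix_vector_mult_def row_def inner_vec_def mult.commute)
  then have "\<not> inj ((*v) (rrep N i v))"
    using assms(2) by (metis injD matrix_vector_mult_0_right)
  then show ?thesis
    using det_nz_iff_inj[of "(*v) (rrep N i v)"] by (simp add: matrix_vector_mul_linear)
qed

lemma rrep_lin:
  fixes N :: "real^'n^'n"
  shows "det (rrep N i (a *s v + b *s v')) = a * det (rrep N i v) + b * det (rrep N i v')"
  unfolding rrep_def
  using det_row_add[of i "\<lambda>_. a *s v" "\<lambda>_. b *s v'" "\<lambda>r. row r N"]
    det_row_mul[of i a "\<lambda>_. v" "\<lambda>r. row r N"] det_row_mul[of i b "\<lambda>_. v'" "\<lambda>r. row r N"]
  by simp

lemma rrep_proj: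
  fixes N :: "real^'n^'n"
  assumes "N *v u = 0" "u \<noteq> 0"
  shows "det (rrep N i v) = (v \<bullet> u) / (u \<bullet> u) * det (rrep N i u)"
proof -
  define c where "c = (v \<bullet> u) / (u \<bullet> u)"
  have uu: "u \<bullet> u \<noteq> 0" using assms by simp
  have "v = 1 *s (v - c *s u) + c *s u" by (simp add: vec_eq_iff)
  then have "det (rrep N i v) = 1 * det (rrep N i (v - c *s u)) + c * det (rrep N i u)"
    by (metis rrep_lin)
  moreover have "(v - c *s u) \<bullet> u = 0"
    using uu by (simp add: c_def scalar_mult_eq_scaleR inner_diff_left)
  ultimately show ?thesis using rrep_zero[OF assms] by (simp add: c_def)
qed


lemma rrep_swap:
  fixes N :: "real^'n^'n"
  assumes ij: "i \<noteq> j" and wN: "\<And>l. (\<Sum>r\<in>UNIV. w $ r * N $ r $ l) = 0"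
  shows "w $ j * det (rrep N i v) = w $ i * det (rrep N j v)"
proof -
  define K where "K = rrep N i v"
  define K' where "K' = (\<chi> r. if r = j then w $ j *s row j K else row r K)"
  have eqK: "K' = (\<chi> r. if r = j then w $ j *s row r K else row r K)"
    unfolding K'_def by (simp add: vec_eq_iff)
  have K'K: "det K' = w $ j * det K"
    unfolding eqK using det_row_mul[of j "w $ j" "\<lambda>r. row r K" "\<lambda>r. row r K"]
    by (simp add: row_def vec_lambda_eta)
  define x where "x = (\<Sum>l\<in>UNIV - {i, j}. w $ l *s row l K')"
  have xs: "x \<in> vec.span {row l K' |l. l \<noteq> j}"
    unfolding x_def
    by (intro vec.span_sum vec.span_scale vec.span_base) blast
  have "det (\<chi> k. if k = j then row j K' + x else row k K') = det K'"
    by (rule det_row_span[OF xs])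
  moreover have rj: "row j K' + x = (- w $ i) *s row i N"
  proof -
    have fin: "finite (UNIV :: 'n set)" by simp
    have sumall: "(\<Sum>l\<in>UNIV. w $ l *s row l N) = 0"
      using wN by (simp add: vec_eq_iff row_def sum_component mult.commute)
    have "(\<Sum>l\<in>UNIV. w $ l *s row l N) = w $ i *s row i N + w $ j *s row j N + (\<Sum>l\<in>UNIV - {i, j}. w $ l *s row l N)"
    proof -
      have "UNIV = insert i (insert j (UNIV - {i, j}))" by auto
      then have "(\<Sum>l\<in>UNIV. w $ l *s row l N) = (\<Sum>l\<in>insert i (insert j (UNIV - {i, j})). w $ l *s row l N)"
        by simp
      also have "\<dots> = w $ i *s row i N + (w $ j *s row j N + (\<Sum>l\<in>UNIV - {i, j}. w $ l *s row l N))"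
        using ij by (subst sum.insert; simp)+
      finally show ?thesis by (simp add: add.assoc)
    qed
    moreover have "x = (\<Sum>l\<in>UNIV - {i, j}. w $ l *s row l N)"
      unfolding x_def K'_def K_def rrep_def by (intro sum.cong) (auto simp: row_def vec_lambda_eta)
    moreover have "row j K' = w $ j *s row j N"
      unfolding K'_def K_def rrep_def using ij by (simp add: row_def vec_eq_iff)
    ultimately have "w $ i *s row i N + (row j K' + x) = 0" using sumall
      by (simp add: add.assoc)
    then have "row j K' + x = - (w $ i *s row i N)"
      by (metis add.commute add_eq_0_iff2 minus_add_cancel)
    then show ?thesis by (simp add: vec_eq_iff)
  qed
  moreover have "(\<chi> k. if k = j then row j K' + x else row k K') = (\<chi> k. if k = j then (- w $ i) *s row i N else row k K)"
    unfolding rj by (simp add: K'_def row_def vec_eq_iff)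
  ultimately have "det K' = det (\<chi> k. if k = j then (- w $ i) *s row i N else row k K)"
    by simp
  also have "\<dots> = (- w $ i) * det (\<chi> k. if k = j then row i N else row k K)"
    using det_row_mul[of j "- w $ i" "\<lambda>_. row i N" "\<lambda>r. row r K"] by simp
  also have "det (\<chi> k. if k = j then row i N else row k K) = - det (rrep N j v)"
  proof -
    define L where "L = (\<chi> k. if k = j then row i N else row k K)"
    have p: "Transposition.transpose i j permutes UNIV" by (simp add: permutes_swap_id)
    have "det (\<chi> r. L $ (Transposition.transpose i j r)) = of_int (sign (Transposition.transpose i j)) * det L"
      by (rule det_permute_rows[OF p])
    moreover have "(\<chi> r. L $ (Transposition.transpose i j r)) = rrep N j v"
      unfolding L_def K_def rrep_def using ij
      by (auto simp: vec_eq_iff row_def Transposition.transpose_def)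
    ultimately show ?thesis using ij by (simp add: sign_swap_id L_def)
  qed
  finally show ?thesis using K'K K_def by simp
qed


lemma sumD_zero:
  fixes N :: "real^'n^'n"
  assumes Nu: "N *v u = 0" and u0: "u \<noteq> 0" and w0: "w \<noteq> 0"
    and wN: "\<And>l. (\<Sum>r\<in>UNIV. w $ r * N $ r $ l) = 0" and uw: "u \<bullet> w = 0"
  shows "(\<Sum>i\<in>UNIV. det (rrep N i (axis i 1))) = 0"
proof -
  obtain j0 where j0: "w $ j0 \<noteq> 0" using w0 by (metis vec_eq_iff zero_index)
  define C where "C = det (rrep N j0 u) / (w $ j0 * (u \<bullet> u))"
  have "det (rrep N i (axis i 1)) = u $ i * w $ i * C" for i
  proof -
    have "det (rrep N i (axis i 1)) = u $ i / (u \<bullet> u) * det (rrep N i u)"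
      using rrep_proj[OF Nu u0, of i "axis i 1"] by (simp add: inner_axis')
    moreover have "w $ j0 * det (rrep N i u) = w $ i * det (rrep N j0 u)"
    proof (cases "i = j0")
      case False then show ?thesis using rrep_swap[OF _ wN, of j0 i u] by simp
    qed simp
    ultimately show ?thesis using j0 u0 unfolding C_def
      by (simp add: field_simps)
  qed
  then have "(\<Sum>i\<in>UNIV. det (rrep N i (axis i 1))) = (\<Sum>i\<in>UNIV. u $ i * w $ i) * C"
    by (simp add: sum_distrib_right)
  also have "(\<Sum>i\<in>UNIV. u $ i * w $ i) = u \<bullet> w" by (simp add: inner_vec_def)
  finally show ?thesis using uw by simp
qed

lemma charpoly_poly:
  fixes M :: "real^'n^'n"
  shows "poly (charpoly M) x = det (\<chi> i j. (if i = j then x else 0) - M $ i $ j)"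
proof -
  define F where "F = (\<chi> i j. (if i = j then [:0, 1:] else 0) - [: M $ i $ j :] :: real poly^'n^'n)"
  define N where "N = (\<chi> i j. (if i = j then x else 0) - M $ i $ j)"
  have pF: "poly (F $ i $ j) x = N $ i $ j" for i j
    by (simp add: F_def N_def)
  show ?thesis
    unfolding charpoly_def det_def F_def[symmetric] N_def[symmetric]
    by (simp add: poly_sum poly_prod of_int_poly pF)
qed

lemma pderiv_sum': "pderiv (sum f A) = (\<Sum>x\<in>A. pderiv (f x))"
  by (induction A rule: infinite_finite_induct) (simp_all add: pderiv_add)

lemma charpoly_pderiv:
  fixes M :: "real^'n^'n" and x :: real
  defines "N \<equiv> (\<chi> i j. (if i = j then x else 0) - M $ i $ j)"
  shows "poly (pderiv (charpoly M)) x = (\<Sum>i\<in>UNIV. det (rrep N i (axis i 1)))"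
proof -
  define F where "F = (\<chi> i j. (if i = j then [:0, 1:] else 0) - [: M $ i $ j :] :: real poly^'n^'n)"
  have dF: "pderiv (F $ i $ j) = (if i = j then 1 else 0)" for i j
    by (simp add: F_def pderiv_diff pderiv_pCons)
  have pF: "poly (F $ i $ j) x = N $ i $ j" for i j
    by (simp add: F_def N_def)
  have pd: "poly (if a = b then 1 else 0) y = (if a = b then 1 else (0::real))" for a b :: 'n and y
    by simp
  have "poly (pderiv (charpoly M)) x =
     (\<Sum>p\<in>{p. p permutes UNIV}. of_int (sign p) * (\<Sum>a\<in>UNIV. (\<Prod>r\<in>UNIV - {a}. N $ r $ p r) * (if a = p a then 1 else 0)))"
    unfolding charpoly_def det_def F_def[symmetric]
    by (simp add: pderiv_sum' pderiv_mult pderiv_smult of_int_poly pderiv_pCons pderiv_prod poly_sum poly_prod dF pF pd del: poly_1 poly_0)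
  also have "\<dots> = (\<Sum>a\<in>UNIV. \<Sum>p\<in>{p. p permutes UNIV}. of_int (sign p) * ((\<Prod>r\<in>UNIV - {a}. N $ r $ p r) * (if a = p a then 1 else 0)))"
    by (simp add: sum_distrib_left sum.swap[of _ "{p. p permutes UNIV}"])
  also have "\<dots> = (\<Sum>i\<in>UNIV. det (rrep N i (axis i 1)))"
  proof (intro sum.cong refl)
    fix a
    show "(\<Sum>p\<in>{p. p permutes UNIV}. of_int (sign p) * ((\<Prod>r\<in>UNIV - {a}. N $ r $ p r) * (if a = p a then 1 else 0)))
       = det (rrep N a (axis a 1))"
      unfolding det_def
    proof (intro sum.cong refl)
      fix p
      have "(\<Prod>i\<in>UNIV. rrep N a (axis a 1) $ i $ p i) = rrep N a (axis a 1) $ a $ p a * (\<Prod>i\<in>UNIV - {a}. rrep N a (axis a 1) $ i $ p i)"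
        by (simp add: prod.remove)
      also have "\<dots> = (if a = p a then 1 else 0) * (\<Prod>r\<in>UNIV - {a}. N $ r $ p r)"
        by (simp add: rrep_def row_def axis_def)
      finally show "of_int (sign p) * ((\<Prod>r\<in>UNIV - {a}. N $ r $ p r) * (if a = p a then 1 else 0)) =
         of_int (sign p) * (\<Prod>i\<in>UNIV. rrep N a (axis a 1) $ i $ p i)" by simp
    qed
  qed
  finally show ?thesis .
qed

lemma Nmv:
  fixes M :: "real^'n^'n"
  shows "(\<chi> i j. (if i = j then t else 0) - M $ i $ j) *v v = t *\<^sub>R v - M *v v"
  by (simp add: vec_eq_iff matrix_vector_mult_def sum_subtractf left_diff_distrib
       if_distrib[of "\<lambda>a. a * _"] cong: if_cong)

lemma charpoly_nz:
  fixes M :: "real^'n^'n"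
  shows "charpoly M \<noteq> 0"
proof
  assume c0: "charpoly M = 0"
  define t where "t = onorm ((*v) M) + 1"
  define N where "N = (\<chi> i j. (if i = j then t else 0) - M $ i $ j)"
  have on: "onorm ((*v) M) \<ge> 0" by (rule onorm_pos_le) simp
  have ker: "v = 0" if "N *v v = 0" for v
  proof (rule ccontr)
    assume v0: "v \<noteq> 0"
    have "M *v v = t *\<^sub>R v" using that unfolding N_def Nmv by simp
    then have "norm (t *\<^sub>R v) \<le> onorm ((*v) M) * norm v"
      by (metis onorm matrix_vector_mul_bounded_linear)
    then have "t * norm v \<le> onorm ((*v) M) * norm v" using on by (simp add: t_def)
    then show False using v0 by (simp add: t_def)
  qed
  have "inj ((*v) N)"
  proof (rule injI)
    fix x y assume "N *v x = N *v y"
    then have "N *v (x - y) = 0" by (simp add: matrix_vector_mult_diff_distrib)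
    then show "x = y" using ker[of "x - y"] by simp
  qed
  then have "det N \<noteq> 0"
    using det_nz_iff_inj[of "(*v) N"] by (simp add: matrix_vector_mul_linear)
  then show False using c0 charpoly_poly[of M t] N_def by simp
qed

lemma simple_nonorth:
  fixes M :: "real^'n^'n"
  assumes simp: "alg_simple_eigenvalue M k" and Mu: "M *v u = k *\<^sub>R u" and u0: "u \<noteq> 0"
    and Mw: "w v* M = k *\<^sub>R w" and w0: "w \<noteq> 0"
  shows "u \<bullet> w \<noteq> 0"
proof
  assume uw: "u \<bullet> w = 0"
  define N where "N = (\<chi> i j. (if i = j then k else 0) - M $ i $ j)"
  have Nu: "N *v u = 0"
    using Mu by (simp add: N_def vec_eq_iff matrix_vector_mult_def sum_subtractf left_diff_distrib
       if_distrib[of "\<lambda>a. a * _"] cong: if_cong)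
  have wN: "(\<Sum>r\<in>UNIV. w $ r * N $ r $ l) = 0" for l
    using Mw by (simp add: N_def vec_eq_iff vector_matrix_mult_def sum_subtractf right_diff_distrib
       if_distrib[of "\<lambda>a. _ * a"] cong: if_cong)
  have "\<not> inj ((*v) N)"
    using u0 Nu by (metis injD matrix_vector_mult_0_right)
  then have "det N = 0"
    using det_nz_iff_inj[of "(*v) N"] by (simp add: matrix_vector_mul_linear)
  then have p0: "poly (charpoly M) k = 0"
    unfolding charpoly_poly N_def[symmetric] .
  have p1: "poly (pderiv (charpoly M)) k = 0"
    using charpoly_pderiv[of M k] sumD_zero[OF Nu u0 w0 wN uw] N_def by simp
  have o1: "order k (charpoly M) = 1" using simp by (simp add: alg_simple_eigenvalue_def)
  show False
  proof -
    have False: "charpoly M \<noteq> 0" by (rule charpoly_nz)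
    have "order k (charpoly M) = Suc (order k (pderiv (charpoly M)))"
      by (rule order_pderiv[OF False p0])
    then have o0: "order k (pderiv (charpoly M)) = 0" using o1 by simp
    then have "pderiv (charpoly M) = 0" using p1 order_root by blast
    then have "degree (charpoly M) = 0" using pderiv_eq_0_iff by blast
    then have "charpoly M = [: coeff (charpoly M) 0 :]" using degree_0_id by metis
    then have "charpoly M = 0" using p0 by (metis poly_pCons mult_zero_right add_0_right poly_0 pCons_0_0)
    then show False using False by simp
  qed
qed


lemma outer_mv: "outer x y *v v = (y \<bullet> v) *\<^sub>R x"
  by (simp add: outer_def matrix_vector_mult_def vec_eq_iff inner_vec_def sum_distrib_left mult_ac)

lemma minv: "invertible A \<Longrightarrow> A ** matrix_inv A = mat 1 \<and> matrix_inv A ** A = mat 1"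
  unfolding matrix_inv_def invertible_def by (rule someI_ex)

lemma restr_pinv_props:
  fixes T :: "real^'n^'n"
  assumes zw: "z \<bullet> w \<noteq> 0" and inv: "\<And>y. y \<bullet> w = 0 \<Longrightarrow> (T *v y) \<bullet> w = 0"
    and inj: "\<And>y. y \<bullet> w = 0 \<Longrightarrow> T *v y = 0 \<Longrightarrow> y = 0"
  shows "(\<forall>y. y \<bullet> w = 0 \<longrightarrow> (restr_pinv T w z *v y) \<bullet> w = 0 \<and> T *v (restr_pinv T w z *v y) = y)
         \<and> restr_pinv T w z *v z = 0"
proof -
  define c where "c = z \<bullet> w"
  define Q where "Q = mat 1 - (1 / c) *\<^sub>R outer z w"
  have Qv: "Q *v v = v - ((w \<bullet> v) / c) *\<^sub>R z" for v
    by (simp add: Q_def matrix_vector_mult_diff_rdistrib outer_mv scaleR_matrix_vector_assoc[symmetric])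
  have Qw: "(Q *v v) \<bullet> w = 0" for v
    using zw by (simp add: Qv c_def inner_diff_left inner_diff_right inner_commute)
  have Qz: "Q *v z = 0" using zw by (simp add: Qv c_def inner_commute)
  have Qid: "Q *v v = v" if "v \<bullet> w = 0" for v
    using that by (simp add: Qv inner_commute)
  define T3 where "T3 = T ** Q + (1 / c) *\<^sub>R outer z w"
  have T3v: "T3 *v v = T *v (Q *v v) + ((w \<bullet> v) / c) *\<^sub>R z" for v
    by (simp add: T3_def matrix_vector_mult_add_rdistrib outer_mv scaleR_matrix_vector_assoc[symmetric]
        matrix_vector_mul_assoc)
  have T3inj: "inj ((*v) T3)"
  proof (rule injI)
    fix x y assume "T3 *v x = T3 *v y"
    then have e: "T3 *v (x - y) = 0" by (simp add: matrix_vector_mult_diff_distrib)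
    define d where "d = x - y"
    have "(T3 *v d) \<bullet> w = (w \<bullet> d)"
      using zw by (simp add: T3v inner_add_left Qw c_def inv)
    then have wd: "w \<bullet> d = 0" using e d_def by simp
    then have "T *v d = 0" using e unfolding d_def[symmetric] T3v by (simp add: Qid inner_commute)
    then have "d = 0" using inj wd by (simp add: inner_commute)
    then show "x = y" by (simp add: d_def)
  qed
  then obtain B where "B ** T3 = mat 1" using matrix_left_invertible_injective by blast
  then have TB: "T3 ** B = mat 1" using matrix_left_right_inverse by blast
  define X where "X = B ** Q"
  have P1: "(\<forall>y. y \<bullet> w = 0 \<longrightarrow> (X *v y) \<bullet> w = 0 \<and> T *v (X *v y) = y) \<and> X *v z = 0"
  proof (intro conjI allI impI)
    fix y assume yw: "y \<bullet> w = 0"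
    define x where "x = B *v y"
    have "T3 *v x = y" using TB by (simp add: x_def matrix_vector_mul_assoc)
    then have Tx: "T *v (Q *v x) + ((w \<bullet> x) / c) *\<^sub>R z = y" by (simp add: T3v)
    then have "(T *v (Q *v x) + ((w \<bullet> x) / c) *\<^sub>R z) \<bullet> w = 0" using yw by simp
    then have wx: "w \<bullet> x = 0" using zw by (simp add: inner_add_left inv Qw c_def)
    have Xy: "X *v y = x" by (simp add: X_def x_def Qid yw matrix_vector_mul_assoc[symmetric])
    show "(X *v y) \<bullet> w = 0" using wx by (simp add: Xy inner_commute)
    show "T *v (X *v y) = y" using Tx wx by (simp add: Xy Qid inner_commute)
  next
    show "X *v z = 0" by (simp add: X_def Qz matrix_vector_mul_assoc[symmetric])
  qed
  have uniq: "X1 = X2" if h1: "(\<forall>y. y \<bullet> w = 0 \<longrightarrow> (X1 *v y) \<bullet> w = 0 \<and> T *v (X1 *v y) = y) \<and> X1 *v z = 0"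
    and h2: "(\<forall>y. y \<bullet> w = 0 \<longrightarrow> (X2 *v y) \<bullet> w = 0 \<and> T *v (X2 *v y) = y) \<and> X2 *v z = 0" for X1 X2
  proof -
    have "X1 *v v = X2 *v v" for v
    proof -
      have dec: "v = Q *v v + ((w \<bullet> v) / c) *\<^sub>R z" by (simp add: Qv)
      have e1: "Xi *v v = Xi *v (Q *v v)" if "Xi *v z = 0" for Xi :: "real^'n^'n"
        by (subst dec) (simp add: matrix_vector_right_distrib matrix_vector_mult_scaleR that)
      define d where "d = X1 *v (Q *v v) - X2 *v (Q *v v)"
      have dw: "d \<bullet> w = 0" using h1 h2 Qw by (simp add: d_def inner_diff_left)
      have "T *v d = 0" using h1 h2 Qw by (simp add: d_def matrix_vector_mult_diff_distrib)
      then have "d = 0" using inj dw by simp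
      then show ?thesis using e1 h1 h2 by (simp add: d_def)
    qed
    then show ?thesis by (simp add: matrix_eq)
  qed
  have "\<exists>!X. (\<forall>y. y \<bullet> w = 0 \<longrightarrow> (X *v y) \<bullet> w = 0 \<and> T *v (X *v y) = y) \<and> X *v z = 0"
    using P1 uniq by blast
  then show ?thesis unfolding restr_pinv_def by (rule theI')
qed


theorem proposition2:
  fixes A B :: "real^'n^'n" and lam :: real and u us uN usN :: "real^'n"
  assumes A_inv: "invertible A"
    and lam_pos: "lam > 0"
    and lam_eig: "gen_eigenvalue A B (complex_of_real lam)"
    and lam_min: "\<And>mu. gen_eigenvalue A B mu \<Longrightarrow> cmod mu \<ge> lam"
    and lam_unique: "\<And>mu. gen_eigenvalue A B mu \<Longrightarrow> cmod mu = lam \<Longrightarrow> mu = complex_of_real lam"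
    and simple: "alg_simple_eigenvalue (matrix_inv A ** B) (1 / lam)"
    and u_unit: "norm u = 1" and u_eq: "A *v u = lam *s (B *v u)"
    and us_unit: "norm us = 1" and us_eq: "transpose A *v us = lam *s (transpose B *v us)"
    and nz: "usN \<bullet> (A *v uN) \<noteq> 0"
    and kN_P: "\<not> restr_eigenvalue
        (let M = matrix_inv A ** B; k = 1 / lam;
             ut = (1 / norm (transpose A *v us)) *s (transpose A *v us);
             P = mat 1 - (1 / (u \<bullet> ut)) *\<^sub>R outer u ut
         in P ** M ** P)
        ((1 / norm (transpose A *v us)) *s (transpose A *v us))
        ((usN \<bullet> (B *v uN)) / (usN \<bullet> (A *v uN)))"
    and kN_Ps: "\<not> restr_eigenvalue
        (let M = matrix_inv A ** B;
             ut = (1 / norm (transpose A *v us)) *s (transpose A *v us);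
             Ps = mat 1 - (1 / (u \<bullet> ut)) *\<^sub>R outer ut u
         in Ps ** transpose M ** Ps)
        u
        ((usN \<bullet> (B *v uN)) / (usN \<bullet> (A *v uN)))"
  shows
    "let M = matrix_inv A ** B; k = 1 / lam;
         ut = (1 / norm (transpose A *v us)) *s (transpose A *v us);
         P = mat 1 - (1 / (u \<bullet> ut)) *\<^sub>R outer u ut;
         Ps = mat 1 - (1 / (u \<bullet> ut)) *\<^sub>R outer ut u;
         kN = (usN \<bullet> (B *v uN)) / (usN \<bullet> (A *v uN));
         RN = (B - kN *\<^sub>R A) *v uN;
         RNs = (transpose B - kN *\<^sub>R transpose A) *v usN;
         X = restr_pinv (P ** M ** P - kN *\<^sub>R mat 1) ut u;
         Xs = restr_pinv (Ps ** transpose M ** Ps - kN *\<^sub>R mat 1) u ut;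
         CNk = onorm (\<lambda>x. (transpose (Ps ** Xs ** Ps) ** (M - k *\<^sub>R mat 1) ** P ** X ** P
                            ** matrix_inv A) *v x);
         etaNk = norm RN * norm RNs / \<bar>usN \<bullet> (A *v uN)\<bar>
     in \<bar>kN - k\<bar> \<le> CNk * etaNk"
proof -
  define Ai where "Ai = matrix_inv A"
  define M where "M = Ai ** B"
  define k where "k = 1 / lam"
  define w where "w = transpose A *v us"
  define ut where "ut = (1 / norm w) *s w"
  define c where "c = u \<bullet> ut"
  define P where "P = mat 1 - (1 / c) *\<^sub>R outer u ut"
  define Ps where "Ps = mat 1 - (1 / c) *\<^sub>R outer ut u"
  define a where "a = usN \<bullet> (A *v uN)"
  define kN where "kN = (usN \<bullet> (B *v uN)) / a"
  define RN where "RN = (B - kN *\<^sub>R A) *v uN"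
  define RNs where "RNs = (transpose B - kN *\<^sub>R transpose A) *v usN"
  define T where "T = P ** M ** P - kN *\<^sub>R mat 1"
  define Ts where "Ts = Ps ** transpose M ** Ps - kN *\<^sub>R mat 1"
  define X where "X = restr_pinv T ut u"
  define Xs where "Xs = restr_pinv Ts u ut"
  define C where "C = transpose (Ps ** Xs ** Ps) ** (M - k *\<^sub>R mat 1) ** P ** X ** P ** Ai"
  have AAi: "A ** Ai = mat 1" and AiA: "Ai ** A = mat 1" using minv[OF A_inv] by (auto simp: Ai_def)
  have lam0: "lam \<noteq> 0" using lam_pos by simp
  have a0: "a \<noteq> 0" using nz by (simp add: a_def)
  \<comment> \<open>eigen relations\<close>
  have Bu: "B *v u = k *\<^sub>R (A *v u)"
    using u_eq lam0 by (simp add: k_def scalar_mult_eq_scaleR)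
  have AiAv: "Ai *v (A *v v) = v" for v by (simp add: matrix_vector_mul_assoc AiA)
  have Mu: "M *v u = k *\<^sub>R u"
    by (simp add: M_def matrix_vector_mul_assoc[symmetric] Bu matrix_vector_mult_scaleR AiAv)
  have wdef: "w = us v* A" by (simp add: w_def)
  have usB: "us v* B = k *\<^sub>R w"
    using us_eq lam0 by (simp add: k_def wdef scalar_mult_eq_scaleR)
  have Mw: "w v* M = k *\<^sub>R w"
    by (simp add: M_def wdef vector_matrix_mul_assoc matrix_mul_assoc AAi usB[unfolded wdef])
  have w0: "w \<noteq> 0"
  proof
    assume "w = 0"
    then have "us v* (A ** Ai) = 0" by (simp add: wdef vector_matrix_mul_assoc[symmetric])
    then show False using us_unit by (simp add: AAi)
  qed
  have u0: "u \<noteq> 0" using u_unit by auto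
  have uw: "u \<bullet> w \<noteq> 0"
    by (rule simple_nonorth[OF _ Mu u0 Mw w0]) (use simple in \<open>simp add: M_def Ai_def k_def\<close>)
  have utw: "ut = (1 / norm w) *\<^sub>R w" by (simp add: ut_def scalar_mult_eq_scaleR)
  have c0: "c \<noteq> 0" using uw w0 by (simp add: c_def utw)
  have Mut: "ut v* M = k *\<^sub>R ut"
    by (simp add: utw scaleR_vector_matrix_assoc Mw)
  \<comment> \<open>projectors\<close>
  have Pv: "P *v v = v - ((ut \<bullet> v) / c) *\<^sub>R u" for v
    by (simp add: P_def matrix_vector_mult_diff_rdistrib outer_mv scaleR_matrix_vector_assoc[symmetric])
  have Psv: "Ps *v v = v - ((u \<bullet> v) / c) *\<^sub>R ut" for v
    by (simp add: Ps_def matrix_vector_mult_diff_rdistrib outer_mv scaleR_matrix_vector_assoc[symmetric])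
  have Pperp: "(P *v v) \<bullet> ut = 0" for v
    using c0 by (simp add: Pv c_def inner_diff_left inner_diff_right inner_commute)
  have Psperp: "(Ps *v v) \<bullet> u = 0" for v
    using c0 by (simp add: Psv c_def inner_diff_left inner_diff_right inner_commute)
  have Pid: "P *v v = v" if "v \<bullet> ut = 0" for v
    using that by (simp add: Pv inner_commute)
  have Psid: "Ps *v v = v" if "v \<bullet> u = 0" for v
    using that by (simp add: Psv inner_commute)
  have utM: "ut \<bullet> (M *v v) = k * (ut \<bullet> v)" for v
    using dot_lmul_matrix[of ut M v] by (simp add: Mut)
  have uMt: "u \<bullet> (transpose M *v v) = k * (u \<bullet> v)" for v
    using dot_lmul_matrix[of v M u] by (simp add: Mu inner_commute)
  have PM: "P *v (M *v v) = M *v (P *v v)" for v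
    by (simp add: Pv utM matrix_vector_mult_diff_distrib matrix_vector_mult_scaleR Mu)
  have PsM: "Ps *v (transpose M *v v) = transpose M *v (Ps *v v)" for v
  proof -
    have "transpose M *v ut = k *\<^sub>R ut" using Mut by simp
    then show ?thesis
      by (simp add: Psv uMt matrix_vector_mult_diff_distrib matrix_vector_mult_scaleR del: transpose_matrix_vector)
  qed
  \<comment> \<open>T and Ts\<close>
  have Tv: "T *v y = P *v (M *v (P *v y)) - kN *\<^sub>R y" for y
    by (simp add: T_def matrix_vector_mult_diff_rdistrib matrix_vector_mul_assoc matrix_mul_assoc scaleR_matrix_vector_assoc[symmetric])
  have Tsv: "Ts *v y = Ps *v (transpose M *v (Ps *v y)) - kN *\<^sub>R y" for y
    by (simp add: Ts_def matrix_vector_mult_diff_rdistrib matrix_vector_mul_assoc matrix_mul_assoc scaleR_matrix_vector_assoc[symmetric]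
        del: transpose_matrix_vector)
  have Tinv: "(T *v y) \<bullet> ut = 0" if "y \<bullet> ut = 0" for y
    using that by (simp add: Tv inner_diff_left Pperp)
  have Tsinv: "(Ts *v y) \<bullet> u = 0" if "y \<bullet> u = 0" for y
    using that by (simp add: Tsv inner_diff_left Psperp del: transpose_matrix_vector)
  have Tinj: "y = 0" if "y \<bullet> ut = 0" "T *v y = 0" for y
  proof (rule ccontr)
    assume "y \<noteq> 0"
    moreover have "(P ** M ** P) *v y = kN *s y"
      using that by (simp add: Tv matrix_vector_mul_assoc[symmetric] scalar_mult_eq_scaleR)
    ultimately show False using kN_P that(1)
      unfolding restr_eigenvalue_def Let_def
      by (auto simp: M_def Ai_def P_def c_def ut_def w_def kN_def a_def)
  qed
  have Tsinj: "y = 0" if "y \<bullet> u = 0" "Ts *v y = 0" for y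
  proof (rule ccontr)
    assume "y \<noteq> 0"
    moreover have "(Ps ** transpose M ** Ps) *v y = kN *s y"
      using that by (simp add: Tsv matrix_vector_mul_assoc[symmetric] scalar_mult_eq_scaleR del: transpose_matrix_vector)
    ultimately show False using kN_Ps that(1)
      unfolding restr_eigenvalue_def Let_def
      by (auto simp: M_def Ai_def Ps_def c_def ut_def w_def kN_def a_def)
  qed
  have uut: "u \<bullet> ut \<noteq> 0" using c0 c_def by simp
  then have utu: "ut \<bullet> u \<noteq> 0" by (simp add: inner_commute)
  have Xp: "(\<forall>y. y \<bullet> ut = 0 \<longrightarrow> (X *v y) \<bullet> ut = 0 \<and> T *v (X *v y) = y) \<and> X *v u = 0"
    unfolding X_def by (rule restr_pinv_props[of u ut T, OF uut Tinv Tinj])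
  have Xsp: "(\<forall>y. y \<bullet> u = 0 \<longrightarrow> (Xs *v y) \<bullet> u = 0 \<and> Ts *v (Xs *v y) = y) \<and> Xs *v ut = 0"
    unfolding Xs_def by (rule restr_pinv_props[of ut u Ts, OF utu Tsinv Tsinj])
  have XT: "X *v (T *v y) = y" if "y \<bullet> ut = 0" for y
  proof -
    define d where "d = X *v (T *v y) - y"
    have "d \<bullet> ut = 0" using Xp Tinv[OF that] that by (simp add: d_def inner_diff_left)
    moreover have "T *v d = 0" using Xp Tinv[OF that] by (simp add: d_def matrix_vector_mult_diff_distrib)
    ultimately have "d = 0" using Tinj by blast
    then show ?thesis by (simp add: d_def)
  qed
  have XTs: "Xs *v (Ts *v y) = y" if "y \<bullet> u = 0" for y
  proof -
    define d where "d = Xs *v (Ts *v y) - y"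
    have "d \<bullet> u = 0" using Xsp Tsinv[OF that] that by (simp add: d_def inner_diff_left)
    moreover have "Ts *v d = 0" using Xsp Tsinv[OF that] by (simp add: d_def matrix_vector_mult_diff_distrib)
    ultimately have "d = 0" using Tsinj by blast
    then show ?thesis by (simp add: d_def)
  qed
  \<comment> \<open>main identity\<close>
  define y0 where "y0 = P *v uN"
  define g where "g = M *v uN - k *\<^sub>R uN"
  have PP: "P *v (P *v v) = P *v v" for v using Pid Pperp by simp
  have PsPs: "Ps *v (Ps *v v) = Ps *v v" for v using Psid Psperp by simp
  have AiRN: "Ai *v RN = M *v uN - kN *\<^sub>R uN"
    by (simp add: RN_def M_def matrix_vector_mult_diff_rdistrib matrix_vector_mul_assoc
        scaleR_matrix_vector_assoc[symmetric] matrix_vector_mult_diff_distrib matrix_vector_mult_scaleR AiA)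
  have "P *v (Ai *v RN) = T *v y0"
    by (simp add: AiRN Tv y0_def PP PM matrix_vector_mult_diff_distrib matrix_vector_mult_scaleR)
  then have XPRN: "X *v (P *v (Ai *v RN)) = y0" using XT Pperp y0_def by simp
  have "(M - k *\<^sub>R mat 1) *v y0 = g"
    using c0 by (simp add: y0_def g_def Pv matrix_vector_mult_diff_rdistrib scaleR_matrix_vector_assoc[symmetric]
        matrix_vector_mult_diff_distrib matrix_vector_mult_scaleR Mu algebra_simps)
  then have CRN: "C *v RN = transpose (Ps ** Xs ** Ps) *v g"
    by (simp add: C_def matrix_vector_mul_assoc[symmetric] XPRN y0_def PP del: transpose_matrix_vector)
  define v where "v = usN v* A"
  have usNB: "usN v* B = v v* M"
    by (simp add: v_def M_def vector_matrix_mul_assoc matrix_mul_assoc AAi)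
  have RNs': "RNs = transpose M *v v - kN *\<^sub>R v"
    by (simp add: RNs_def usNB v_def matrix_vector_mult_diff_rdistrib scaleR_matrix_vector_assoc[symmetric])
  have "Ps *v RNs = Ts *v (Ps *v v)"
    by (simp add: RNs' Tsv PsPs PsM matrix_vector_mult_diff_distrib matrix_vector_mult_scaleR del: transpose_matrix_vector)
  then have QRNs: "(Ps ** Xs ** Ps) *v RNs = Ps *v v"
    using XTs Psperp by (simp add: matrix_vector_mul_assoc[symmetric] PsPs)
  have utg: "ut \<bullet> g = 0" by (simp add: g_def inner_diff_right utM)
  have vg: "v \<bullet> g = usN \<bullet> (B *v uN) - k * a"
  proof -
    have "v \<bullet> (M *v uN) = usN \<bullet> (A *v (M *v uN))" by (simp add: v_def dot_lmul_matrix)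
    also have "A *v (M *v uN) = B *v uN"
      by (simp add: M_def matrix_vector_mul_assoc matrix_mul_assoc AAi)
    finally show ?thesis by (simp add: g_def inner_diff_right a_def v_def dot_lmul_matrix)
  qed
  have ident: "RNs \<bullet> (C *v RN) = (kN - k) * a"
  proof -
    have "RNs \<bullet> (C *v RN) = RNs \<bullet> (g v* (Ps ** Xs ** Ps))" by (simp add: CRN)
    also have "\<dots> = g \<bullet> ((Ps ** Xs ** Ps) *v RNs)" by (metis dot_lmul_matrix inner_commute)
    also have "\<dots> = v \<bullet> g" using utg by (simp add: QRNs Psv inner_diff_right inner_commute)
    also have "\<dots> = (kN - k) * a" using a0 by (simp add: vg kN_def algebra_simps)
    finally show ?thesis .
  qed
  have "\<bar>kN - k\<bar> * \<bar>a\<bar> \<le> norm RNs * norm (C *v RN)"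
    using Cauchy_Schwarz_ineq2[of RNs "C *v RN"] by (simp add: ident abs_mult)
  also have "\<dots> \<le> norm RNs * (onorm ((*v) C) * norm RN)"
    by (intro mult_left_mono onorm) auto
  finally have fin: "\<bar>kN - k\<bar> \<le> onorm ((*v) C) * (norm RN * norm RNs / \<bar>a\<bar>)"
    using a0 by (simp add: field_simps)
  show ?thesis
    unfolding Let_def Ai_def[symmetric] M_def[symmetric] k_def[symmetric] w_def[symmetric]
      ut_def[symmetric] c_def[symmetric] P_def[symmetric] Ps_def[symmetric] a_def[symmetric]
      kN_def[symmetric] RN_def[symmetric] RNs_def[symmetric] T_def[symmetric] Ts_def[symmetric]
      X_def[symmetric] Xs_def[symmetric] C_def[symmetric]
    using fin by simp
qed

end
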